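(* Fix $\nu>0$. (a) $L(\nu/\mu,\mu)\to E(\nu)$ as $\mu\to\infty$, and $\mathrm{L}(\nu/\lambda,\lambda)\to E(\nu)$ as $\lambda\to\infty$. (b) $\mathrm{Ssi}(\nu/\lambda,\lambda)\to\mathrm{Si}(\nu)$ as $\lambda\to\infty$. (c) $\lambda\,\mathrm{Eci}(\nu/\lambda,\lambda)\to i(1-e^{i\nu})$ as $\lambda\to\infty$.
   Context: $L(x,\mu)=\sum_{k=1}^\infty \frac{e^{ikx}}{k+\mu}$; $\mathrm{L}(x,\lambda)=e^{-ix}L\left(2x,\frac{\lambda-1}{2}\right)$; $E(t)=\int_0^\infty\frac{e^{iu}}{u+t}\,du$ for $t>0$; $\mathrm{Si}(t)=\int_0^t\frac{\sin u}{u}\,du$; $\mathrm{Ssi}(x,\lambda)=\int_0^x\frac{\sin\lambda t}{\sin t}\,dt$; $\mathrm{Eci}(x,\lambda)=\int_0^x\frac{e^{it\lambda}}{\cos t}\,dt$. *)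

theory Defs
  imports "HOL-Analysis.Analysis" "HOL-Probability.Sinc_Integral"
begin

definition Lser :: "real \<Rightarrow> real \<Rightarrow> complex" where
  "Lser x \<mu> = (\<Sum>k. exp (\<i> * of_real (real (Suc k) * x)) / of_real (real (Suc k) + \<mu>))"

definition Lbold :: "real \<Rightarrow> real \<Rightarrow> complex" where
  "Lbold x lam = exp (- \<i> * of_real x) * Lser (2 * x) ((lam - 1) / 2)"

text \<open>E(t) = int_0^infty e^{iu}/(u+t) du, an improper (conditionally convergent) integral.\<close>
definition Eint :: "real \<Rightarrow> complex" where
  "Eint t = Lim at_top (\<lambda>R. integral {0..R} (\<lambda>u. exp (\<i> * of_real u) / of_real (u + t)))"

definition Ssi :: "real \<Rightarrow> real \<Rightarrow> real" where
  "Ssi x lam = integral {0..x} (\<lambda>t. sin (lam * t) / sin t)"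

definition Eci :: "real \<Rightarrow> real \<Rightarrow> complex" where
  "Eci x lam = integral {0..x} (\<lambda>t. exp (\<i> * of_real (t * lam)) / of_real (cos t))"

end

theory Submission
  imports Defs "HOL-Real_Asymp.Real_Asymp"
begin


lemma cos_lower: "1 - x^2/2 \<le> cos (x::real)"
proof -
  have *: "1 - y^2/2 \<le> cos y" if "y \<ge> 0" for y :: real
  proof -
    let ?f = "\<lambda>x::real. cos x - 1 + x^2/2"
    have "?f 0 \<le> ?f y"
    proof (rule DERIV_nonneg_imp_nondecreasing[OF that])
      fix u :: real assume "0 \<le> u" "u \<le> y"
      show "\<exists>d. (?f has_real_derivative d) (at u) \<and> 0 \<le> d"
        by (rule exI[of _ "u - sin u"]) (auto intro!: derivative_eq_intros sin_x_le_x \<open>0 \<le> u\<close>)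
    qed
    then show ?thesis by simp
  qed
  show ?thesis using *[of x] *[of "-x"] by (cases "x \<ge> 0") auto
qed

lemma sin_lower: "x \<ge> 0 \<Longrightarrow> x - x^3/6 \<le> sin (x::real)"
proof -
  assume x: "x \<ge> 0"
  let ?f = "\<lambda>x::real. sin x - x + x^3/6"
  have "?f 0 \<le> ?f x"
  proof (rule DERIV_nonneg_imp_nondecreasing[OF x])
    fix u :: real assume "0 \<le> u" "u \<le> x"
    show "\<exists>d. (?f has_real_derivative d) (at u) \<and> 0 \<le> d"
      by (rule exI[of _ "cos u - 1 + u^2/2"]) (use cos_lower[of u] in \<open>auto intro!: derivative_eq_intros simp: power2_eq_square power3_eq_cube\<close>)
  qed
  then show ?thesis by simp
qed

lemma integral_scale0:
  fixes g :: "real \<Rightarrow> 'b::real_normed_vector"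
  assumes m: "m > 0"
  shows "integral {0..b/m} g = (1/m) *\<^sub>R integral {0..b} (\<lambda>s. g (s/m))"
proof -
  have img: "(\<lambda>x. x / m) ` {0..b} = {0..b/m}"
  proof
    show "(\<lambda>x. x / m) ` {0..b} \<subseteq> {0..b/m}" using m by (auto simp: divide_right_mono)
    show "{0..b/m} \<subseteq> (\<lambda>x. x / m) ` {0..b}"
    proof
      fix y assume "y \<in> {0..b/m}"
      then have "y*m \<in> {0..b}" "y = (y*m)/m" using m by (auto simp: field_simps)
      then show "y \<in> (\<lambda>x. x / m) ` {0..b}" by blast
    qed
  qed
  have "integral ((\<lambda>x. x / m) ` {0..b}) (\<lambda>x. (\<lambda>s. g (s/m)) (m * x)) = (1 / \<bar>m\<bar>) *\<^sub>R integral {0..b} (\<lambda>s. g (s/m))"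
    by (rule integral_stretch_real) (use m in auto)
  then show ?thesis using m by (simp add: img)
qed



lemma int_bound0:
  fixes f :: "real \<Rightarrow> 'b::banach"
  assumes "continuous_on {0..b} f" "b \<ge> 0" "\<And>x. x \<in> {0..b} \<Longrightarrow> norm (f x) \<le> B"
  shows "norm (integral {0..b} f) \<le> B * b"
proof -
  have B: "B \<ge> 0" using assms(3)[of 0] assms(2) by (auto intro: order_trans[OF norm_ge_zero])
  have "(f has_integral integral {0..b} f) (cbox 0 b)"
    using integrable_continuous_real[OF assms(1)] by (simp add: has_integral_integral)
  from has_integral_bound[OF B this] assms show ?thesis by auto
qed

lemma Si_integral: "Si v = integral {0..v} sinc" if "v \<ge> 0"
proof -
  have "(sinc has_integral Si v - Si 0) {0..v}"
  proof (rule fundamental_theorem_of_calculus[OF that])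
    fix x show "(Si has_vector_derivative sinc x) (at x within {0..v})"
      using has_field_derivative_at_within[OF DERIV_Si[of x]]
      unfolding has_real_derivative_iff_has_vector_derivative .
  qed
  moreover have "Si 0 = 0" by (simp add: Si_def zero_ereal_def)
  ultimately show ?thesis by (simp add: integral_unique)
qed

lemma sinc_bounds:
  assumes "0 \<le> y" "y \<le> 1"
  shows "1 - y^2/6 \<le> sinc y" "sinc y \<le> 1"
proof -
  show "1 - y^2/6 \<le> sinc y"
  proof (cases "y = 0")
    case False
    then have y: "y > 0" using assms by auto
    have "y - y^3/6 \<le> sin y" using sin_lower assms by auto
    then have "(y - y^3/6)/y \<le> sin y / y" using y by (simp add: divide_right_mono)
    moreover have "(y - y^3/6)/y = 1 - y^2/6" using y by (simp add: field_simps power2_eq_square power3_eq_cube)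
    ultimately show ?thesis using False by simp
  qed simp
  show "sinc y \<le> 1"
    using sin_x_le_x[of y] assms by (cases "y = 0") (auto simp: divide_le_eq_1)
qed

lemma abs_sinc_le1: "\<bar>sinc s\<bar> \<le> 1"
  using abs_sin_x_le_abs_x[of s] by (cases "s = 0") (auto simp: abs_divide divide_le_eq_1)

lemma part_c:
  assumes nu: "\<nu> > 0"
  shows "((\<lambda>lam. Ssi (\<nu> / lam) lam) \<longlongrightarrow> Si \<nu>) at_top"
proof -
  have ev: "\<bar>Ssi (\<nu> / lam) lam - Si \<nu>\<bar> \<le> \<nu>^2 / lam^2 * \<nu>" if lam: "lam \<ge> \<nu>" for lam
  proof -
    have lp: "lam > 0" using lam nu by auto
    define \<psi> where "\<psi> s = sinc s / sinc (s / lam)" for s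
    have yb: "0 \<le> s / lam" "s / lam \<le> 1" if "s \<in> {0..\<nu>}" for s
      using that lam lp by (auto simp: divide_le_eq_1)
    have sincpos: "sinc (s/lam) > 0" if "s \<in> {0..\<nu>}" for s
    proof -
      have "1 - (s/lam)^2/6 \<le> sinc (s/lam)" using sinc_bounds(1)[OF yb[OF that]] .
      moreover have "(s/lam)^2 \<le> 1" using yb[OF that] by (simp add: power_le_one)
      ultimately show ?thesis by linarith
    qed
    have "Ssi (\<nu> / lam) lam = (1/lam) *\<^sub>R integral {0..\<nu>} (\<lambda>s. sin (lam * (s/lam)) / sin (s/lam))"
      unfolding Ssi_def by (rule integral_scale0[OF lp])
    also have "\<dots> = integral {0..\<nu>} (\<lambda>s. (1/lam) *\<^sub>R (sin (lam * (s/lam)) / sin (s/lam)))"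
      by (rule integral_cmul[symmetric])
    also have "\<dots> = integral {0..\<nu>} \<psi>"
    proof (rule integral_spike[of "{0}"])
      fix s assume "s \<in> {0..\<nu>} - {0}"
      then have s: "s > 0" by auto
      show "\<psi> s = (1/lam) *\<^sub>R (sin (lam * (s/lam)) / sin (s/lam))"
        unfolding \<psi>_def using s lp by (simp add: field_simps)
    qed auto
    finally have eq1: "Ssi (\<nu> / lam) lam = integral {0..\<nu>} \<psi>" .
    have cpsi: "continuous_on {0..\<nu>} \<psi>"
      unfolding \<psi>_def
    proof (rule continuous_on_divide)
      show "continuous_on {0..\<nu>} sinc" by (intro continuous_on_sinc continuous_intros)
      show "continuous_on {0..\<nu>} (\<lambda>s. sinc (s/lam))" using lp by (intro continuous_on_sinc continuous_intros) auto
      show "\<forall>x\<in>{0..\<nu>}. sinc (x/lam) \<noteq> 0" using sincpos by (metis less_irrefl)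
    qed
    have csinc: "continuous_on {0..\<nu>} sinc" by (intro continuous_on_sinc continuous_intros)
    have "Ssi (\<nu> / lam) lam - Si \<nu> = integral {0..\<nu>} (\<lambda>s. \<psi> s - sinc s)"
      using eq1 Si_integral[of \<nu>] nu
      by (simp add: integral_diff integrable_continuous_real cpsi csinc)
    also have "\<bar>\<dots>\<bar> \<le> \<nu>^2 / lam^2 * \<nu>"
    proof -
      have "norm (integral {0..\<nu>} (\<lambda>s. \<psi> s - sinc s)) \<le> \<nu>^2 / lam^2 * \<nu>"
      proof (rule int_bound0)
        show "continuous_on {0..\<nu>} (\<lambda>s. \<psi> s - sinc s)" by (intro continuous_intros cpsi csinc)
        show "0 \<le> \<nu>" using nu by simp
        fix s assume s: "s \<in> {0..\<nu>}"
        define a where "a = sinc s"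
        define b where "b = sinc (s/lam)"
        define y where "y = s/lam"
        have y01: "0 \<le> y" "y \<le> 1" using yb[OF s] by (auto simp: y_def)
        have bpos: "b > 0" using sincpos[OF s] by (simp add: b_def)
        have b1: "1 - y^2/6 \<le> b" "b \<le> 1" using sinc_bounds[OF y01] by (auto simp: b_def y_def)
        have a1: "\<bar>a\<bar> \<le> 1" using abs_sinc_le1 by (simp add: a_def)
        have y2: "y^2 \<le> 1" using y01 by (simp add: power_le_one)
        have "\<psi> s - sinc s = a * (1 - b) / b" unfolding \<psi>_def a_def b_def using bpos b_def
          by (simp add: field_simps)
        also have "\<bar>a * (1 - b) / b\<bar> = \<bar>a\<bar> * (1 - b) / b" using bpos b1 by (simp add: abs_mult)
        also have "\<dots> \<le> 1 * (y^2/6) / (5/6)"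
        proof (rule frac_le)
          show "\<bar>a\<bar> * (1 - b) \<le> 1 * (y^2/6)" using a1 b1 by (intro mult_mono) auto
        qed (use b1 y2 in auto)
        also have "\<dots> \<le> y^2" by simp
        also have "y^2 \<le> \<nu>^2/lam^2"
        proof -
          have "y \<le> \<nu>/lam" using s lp by (auto simp: y_def divide_right_mono)
          then have "y^2 \<le> (\<nu>/lam)^2" using y01 by (intro power_mono) auto
          then show ?thesis by (simp add: power_divide)
        qed
        finally show "norm (\<psi> s - sinc s) \<le> \<nu>^2/lam^2" by simp
      qed
      then show ?thesis by simp
    qed
    finally show ?thesis .
  qed
  have "((\<lambda>lam. Ssi (\<nu> / lam) lam - Si \<nu>) \<longlongrightarrow> 0) at_top"
  proof (rule Lim_null_comparison)
    show "\<forall>\<^sub>F lam in at_top. norm (Ssi (\<nu> / lam) lam - Si \<nu>) \<le> \<nu>^2 / lam^2 * \<nu>"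
      using eventually_ge_at_top[of \<nu>] by eventually_elim (use ev in auto)
    show "((\<lambda>lam. \<nu>^2 / lam^2 * \<nu>) \<longlongrightarrow> 0) at_top" by real_asymp
  qed
  then show ?thesis by (simp add: Lim_null[symmetric])
qed



lemma expi_integral:
  assumes "a \<le> b"
  shows "((\<lambda>u. exp (\<i> * of_real u)) has_integral (-\<i> * exp (\<i> * of_real b) - (-\<i> * exp (\<i> * of_real a)))) {a..b}"
proof (rule fundamental_theorem_of_calculus[OF assms])
  fix x :: real
  have "((\<lambda>z. -\<i> * exp (\<i> * z)) has_field_derivative exp (\<i> * of_real x)) (at (of_real x))"
    by (auto intro!: derivative_eq_intros simp: algebra_simps)
  from has_vector_derivative_real_field[OF this]
  show "((\<lambda>u. -\<i> * exp (\<i> * of_real u)) has_vector_derivative exp (\<i> * of_real x)) (at x within {a..b})" .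
qed

lemma part_d:
  assumes nu: "\<nu> > 0"
  shows "((\<lambda>lam. of_real lam * Eci (\<nu> / lam) lam) \<longlongrightarrow> \<i> * (1 - exp (\<i> * of_real \<nu>))) at_top"
proof -
  have ev: "norm (of_real lam * Eci (\<nu> / lam) lam - \<i> * (1 - exp (\<i> * of_real \<nu>))) \<le> \<nu>^2 / lam^2 * \<nu>"
    if lam: "lam \<ge> \<nu>" for lam
  proof -
    have lp: "lam > 0" using lam nu by auto
    define \<psi> where "\<psi> s = exp (\<i> * of_real s) / of_real (cos (s / lam))" for s
    have yb: "0 \<le> s / lam" "s / lam \<le> 1" if "s \<in> {0..\<nu>}" for s
      using that lam lp by (auto simp: divide_le_eq_1)
    have cospos: "cos (s/lam) \<ge> 1/2" if "s \<in> {0..\<nu>}" for s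
    proof -
      have "1 - (s/lam)^2/2 \<le> cos (s/lam)" using cos_lower .
      moreover have "(s/lam)^2 \<le> 1" using yb[OF that] by (simp add: power_le_one)
      ultimately show ?thesis by linarith
    qed
    have "Eci (\<nu> / lam) lam = (1/lam) *\<^sub>R integral {0..\<nu>} (\<lambda>s. exp (\<i> * of_real (s/lam * lam)) / of_real (cos (s/lam)))"
      unfolding Eci_def by (rule integral_scale0[OF lp])
    also have "(\<lambda>s. exp (\<i> * of_real (s/lam * lam)) / of_real (cos (s/lam))) = \<psi>"
      using lp by (auto simp: \<psi>_def)
    finally have eq1: "of_real lam * Eci (\<nu> / lam) lam = integral {0..\<nu>} \<psi>"
      using lp by (simp add: scaleR_conv_of_real)
    have cpsi: "continuous_on {0..\<nu>} \<psi>"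
      unfolding \<psi>_def
    proof (rule continuous_on_divide)
      show "continuous_on {0..\<nu>} (\<lambda>s. exp (\<i> * of_real s))" by (intro continuous_intros)
      show "continuous_on {0..\<nu>} (\<lambda>s. complex_of_real (cos (s/lam)))" using lp by (intro continuous_intros) auto
      show "\<forall>x\<in>{0..\<nu>}. complex_of_real (cos (x/lam)) \<noteq> 0" using cospos by fastforce
    qed
    have cexp: "continuous_on {0..\<nu>} (\<lambda>s. exp (\<i> * of_real s))" by (intro continuous_intros)
    have I2: "integral {0..\<nu>} (\<lambda>s. exp (\<i> * of_real s)) = \<i> * (1 - exp (\<i> * of_real \<nu>))"
      using integral_unique[OF expi_integral[of 0 \<nu>]] nu by (simp add: algebra_simps)
    have "of_real lam * Eci (\<nu> / lam) lam - \<i> * (1 - exp (\<i> * of_real \<nu>)) = integral {0..\<nu>} (\<lambda>s. \<psi> s - exp (\<i> * of_real s))"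
      using eq1 I2 by (simp add: integral_diff integrable_continuous_real cpsi cexp)
    also have "norm \<dots> \<le> \<nu>^2 / lam^2 * \<nu>"
    proof (rule int_bound0)
      show "continuous_on {0..\<nu>} (\<lambda>s. \<psi> s - exp (\<i> * of_real s))" by (intro continuous_intros cpsi cexp)
      show "0 \<le> \<nu>" using nu by simp
      fix s assume s: "s \<in> {0..\<nu>}"
      define c where "c = cos (s/lam)"
      define y where "y = s/lam"
      have y01: "0 \<le> y" "y \<le> 1" using yb[OF s] by (auto simp: y_def)
      have c1: "1 - y^2/2 \<le> c" "c \<le> 1" "c \<ge> 1/2" using cos_lower[of y] cospos[OF s] by (auto simp: c_def y_def)
      have "\<psi> s - exp (\<i> * of_real s) = exp (\<i> * of_real s) * of_real ((1 - c) / c)"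
        unfolding \<psi>_def c_def using c1 c_def by (simp add: field_simps)
      then have "norm (\<psi> s - exp (\<i> * of_real s)) = norm (exp (\<i> * of_real s)) * \<bar>(1 - c) / c\<bar>"
        by (simp only: norm_mult norm_of_real)
      also have "\<dots> = (1 - c) / c" using c1 by simp
      also have "\<dots> \<le> (y^2/2) / (1/2)"
        by (rule frac_le) (use c1 y01 in auto)
      also have "\<dots> = y^2" by simp
      also have "y^2 \<le> \<nu>^2/lam^2"
      proof -
        have "y \<le> \<nu>/lam" using s lp by (auto simp: y_def divide_right_mono)
        then have "y^2 \<le> (\<nu>/lam)^2" using y01 by (intro power_mono) auto
        then show ?thesis by (simp add: power_divide)
      qed
      finally show "norm (\<psi> s - exp (\<i> * of_real s)) \<le> \<nu>^2/lam^2" .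
    qed
    finally show ?thesis .
  qed
  have "((\<lambda>lam. of_real lam * Eci (\<nu> / lam) lam - \<i> * (1 - exp (\<i> * of_real \<nu>))) \<longlongrightarrow> 0) at_top"
  proof (rule Lim_null_comparison)
    show "\<forall>\<^sub>F lam in at_top. norm (of_real lam * Eci (\<nu> / lam) lam - \<i> * (1 - exp (\<i> * of_real \<nu>))) \<le> \<nu>^2 / lam^2 * \<nu>"
      using eventually_ge_at_top[of \<nu>] by eventually_elim (use ev in auto)
    show "((\<lambda>lam. \<nu>^2 / lam^2 * \<nu>) \<longlongrightarrow> 0) at_top" by real_asymp
  qed
  then show ?thesis by (simp add: Lim_null[symmetric])
qed



definition fE :: "real \<Rightarrow> real \<Rightarrow> complex" where
  "fE \<nu> u = exp (\<i> * of_real u) / of_real (u + \<nu>)"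

lemma int_bound:
  fixes f :: "real \<Rightarrow> 'b::banach"
  assumes "continuous_on {a..b} f" "a \<le> b" "\<And>x. x \<in> {a..b} \<Longrightarrow> norm (f x) \<le> B"
  shows "norm (integral {a..b} f) \<le> B * (b - a)"
proof -
  have B: "B \<ge> 0" using assms(3)[of a] assms(2) by (auto intro: order_trans[OF norm_ge_zero])
  have "(f has_integral integral {a..b} f) (cbox a b)"
    using integrable_continuous_real[OF assms(1)] by (simp add: has_integral_integral)
  from has_integral_bound[OF B this] assms show ?thesis by auto
qed

lemma cont_fE: "\<nu> > 0 \<Longrightarrow> 0 \<le> a \<Longrightarrow> continuous_on {a..b} (fE \<nu>)"
  unfolding fE_def by (intro continuous_intros) (auto simp flip: of_real_add)

lemma inv_sq_integral:
  fixes \<nu> R R' :: real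
  assumes "\<nu> > 0" "0 \<le> R" "R \<le> R'"
  shows "((\<lambda>u. 1 / (u + \<nu>)^2) has_integral (1/(R+\<nu>) - 1/(R'+\<nu>))) {R..R'}"
proof -
  have "((\<lambda>u. 1 / (u + \<nu>)^2) has_integral ((-1/(R'+\<nu>)) - (-1/(R+\<nu>)))) {R..R'}"
  proof (rule fundamental_theorem_of_calculus[OF assms(3)])
    fix x assume x: "x \<in> {R..R'}"
    then have "x + \<nu> \<noteq> 0" using assms by auto
    then have "((\<lambda>u. -1/(u+\<nu>)) has_real_derivative 1/(x+\<nu>)^2) (at x)"
      by (auto intro!: derivative_eq_intros simp: power2_eq_square)
    then show "((\<lambda>u. -1/(u+\<nu>)) has_vector_derivative 1/(x+\<nu>)^2) (at x within {R..R'})"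
      by (simp add: has_real_derivative_iff_has_vector_derivative[symmetric] has_field_derivative_at_within)
  qed
  then show ?thesis by simp
qed

lemma deriv_F:
  fixes x \<nu> :: real
  shows "complex_of_real x + complex_of_real \<nu> \<noteq> 0 \<Longrightarrow> ((\<lambda>z. -\<i> * exp (\<i> * z) / (z + of_real \<nu>)) has_field_derivative (exp (\<i> * of_real x) / of_real (x + \<nu>) + \<i> * exp (\<i> * of_real x) / (of_real (x + \<nu>))^2)) (at (of_real x))"
  apply (rule derivative_eq_intros refl | simp)+
  apply (simp add: add_divide_distrib power2_eq_square)
  apply (simp add: divide_simps)
  apply (simp add: algebra_simps)
  done

lemma fE_tail:
  assumes nu: "\<nu> > 0" and R: "0 \<le> R" "R \<le> R'"
  shows "norm (integral {R..R'} (fE \<nu>)) \<le> 3 / (R + \<nu>)"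
proof -
  define F where "F u = -\<i> * exp (\<i> * of_real u) / of_real (u + \<nu>)" for u
  define h where "h u = \<i> * exp (\<i> * of_real u) / (of_real (u + \<nu>))^2" for u
  have FTC: "((\<lambda>u. fE \<nu> u + h u) has_integral (F R' - F R)) {R..R'}"
  proof (rule fundamental_theorem_of_calculus[OF R(2)])
    fix x assume x: "x \<in> {R..R'}"
    then have nz: "complex_of_real x + complex_of_real \<nu> \<noteq> 0"
    proof -
      have "x + \<nu> > 0" using x R nu by auto
      then have "complex_of_real (x + \<nu>) \<noteq> 0" by (simp del: of_real_add)
      then show ?thesis by simp
    qed
    have "((\<lambda>z. -\<i> * exp (\<i> * z) / (z + of_real \<nu>)) has_field_derivative (fE \<nu> x + h x)) (at (of_real x))"
      unfolding fE_def h_def by (rule deriv_F[OF nz])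
    from has_vector_derivative_real_field[OF this]
    show "(F has_vector_derivative fE \<nu> x + h x) (at x within {R..R'})"
      unfolding F_def by simp
  qed
  have ch: "continuous_on {R..R'} h" unfolding h_def using R nu by (intro continuous_intros) (auto simp flip: of_real_add)
  have ih: "h integrable_on {R..R'}" by (rule integrable_continuous_real[OF ch])
  have ifE: "fE \<nu> integrable_on {R..R'}" by (rule integrable_continuous_real[OF cont_fE[OF nu R(1)]])
  have eqI: "integral {R..R'} (fE \<nu>) = (F R' - F R) - integral {R..R'} h"
    using integral_unique[OF FTC] integral_add[OF ifE ih] by (simp add: algebra_simps)
  have "norm (integral {R..R'} h) \<le> 1/(R+\<nu>) - 1/(R'+\<nu>)"
  proof -
    have "norm (integral {R..R'} h) \<le> integral {R..R'} (\<lambda>u. 1 / (u + \<nu>)^2)"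
    proof (rule integral_norm_bound_integral[OF ih])
      show "(\<lambda>u. 1 / (u + \<nu>)^2) integrable_on {R..R'}" using inv_sq_integral[OF nu R] by blast
      fix u assume "u \<in> {R..R'}"
      then have "u + \<nu> > 0" using R nu by auto
      then show "norm (h u) \<le> 1 / (u + \<nu>)^2"
        by (simp add: h_def norm_divide norm_power norm_mult del: of_real_add)
    qed
    then show ?thesis using integral_unique[OF inv_sq_integral[OF nu R]] by simp
  qed
  moreover have "R' + \<nu> > 0" "R + \<nu> > 0" using R nu by auto
  then have "norm (F R') = 1/(R'+\<nu>)" "norm (F R) = 1/(R+\<nu>)"
    by (simp_all add: F_def norm_divide norm_mult del: of_real_add)
  moreover have "1/(R'+\<nu>) \<le> 1/(R+\<nu>)" "1/(R'+\<nu>) \<ge> 0" using R nu by (auto simp: frac_le)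
  ultimately have "norm ((F R' - F R) - integral {R..R'} h) \<le> 3 / (R + \<nu>)"
    using norm_triangle_ineq4[of "F R' - F R" "integral {R..R'} h"] norm_triangle_ineq4[of "F R'" "F R"]
    by linarith
  then show ?thesis by (simp only: eqI)
qed

lemma fE_conv:
  assumes nu: "\<nu> > 0"
  shows "((\<lambda>R. integral {0..R} (fE \<nu>)) \<longlongrightarrow> Eint \<nu>) at_top"
proof -
  define I where "I R = integral {0..R} (fE \<nu>)" for R
  have diff: "dist (I R) (I R') \<le> 3 / (R0 + \<nu>)" if "R0 \<ge> 0" "R0 \<le> R" "R0 \<le> R'" for R R' R0
  proof -
    have gen: "dist (I a) (I b) \<le> 3 / (R0 + \<nu>)" if ab: "R0 \<le> a" "a \<le> b" for a b
    proof -
      have "integral {0..a} (fE \<nu>) + integral {a..b} (fE \<nu>) = integral {0..b} (fE \<nu>)"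
        using Henstock_Kurzweil_Integration.integral_combine[where a=0 and c=a and b=b and f="fE \<nu>"] integrable_continuous_real[OF cont_fE[OF nu, of 0 b]] ab \<open>R0 \<ge> 0\<close>
        by auto
      then have "I b - I a = integral {a..b} (fE \<nu>)"
        unfolding I_def by (metis add_diff_cancel_left')
      then have "dist (I a) (I b) = norm (integral {a..b} (fE \<nu>))"
        by (metis dist_commute dist_norm)
      also have "\<dots> \<le> 3 / (a + \<nu>)" using fE_tail[OF nu, of a b] ab \<open>R0 \<ge> 0\<close> by auto
      also have "\<dots> \<le> 3 / (R0 + \<nu>)" using ab \<open>R0 \<ge> 0\<close> nu by (auto intro!: divide_left_mono)
      finally show ?thesis .
    qed
    show ?thesis
    proof (cases "R \<le> R'")
      case True then show ?thesis using gen[of R R'] that by auto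
    next
      case False then show ?thesis using gen[of R' R] that by (auto simp: dist_commute)
    qed
  qed
  have "cauchy_filter (filtermap I at_top)"
    unfolding cauchy_filter_metric_filtermap
  proof (intro allI impI)
    fix e :: real assume e: "e > 0"
    define R0 where "R0 = 6 / e"
    have R0: "R0 \<ge> 0" "3 / (R0 + \<nu>) < e"
    proof -
      show "R0 \<ge> 0" using e by (simp add: R0_def)
      have pos: "R0 > 0" using e by (simp add: R0_def)
      have "3 / (R0 + \<nu>) < 3 / R0"
        using divide_strict_left_mono[of R0 "R0 + \<nu>" 3] pos nu by (auto simp: zero_less_mult_iff)
      also have "3 / R0 = e / 2" using e by (simp add: R0_def)
      finally show "3 / (R0 + \<nu>) < e" using e by simp
    qed
    show "\<exists>P. eventually P at_top \<and> (\<forall>x y. P x \<and> P y \<longrightarrow> dist (I x) (I y) < e)"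
      by (rule exI[of _ "\<lambda>R. R0 \<le> R"]) (use diff R0 in \<open>auto intro: le_less_trans\<close>)
  qed
  then obtain c where "filtermap I at_top \<le> nhds c"
    using cauchy_filter_complete_converges[OF _ complete_UNIV, of "filtermap I at_top"]
    by (auto simp: filtermap_bot_iff)
  then have lim: "(I \<longlongrightarrow> c) at_top" by (simp add: filterlim_def)
  moreover have "Eint \<nu> = c"
  proof -
    have eqf: "(\<lambda>u. exp (\<i> * of_real u) / of_real (u + \<nu>)) = fE \<nu>"
      by (rule ext) (simp only: fE_def)
    have "Lim at_top I = c" using lim by (intro tendsto_Lim) auto
    then show ?thesis unfolding Eint_def eqf I_def .
  qed
  ultimately show ?thesis by (simp add: I_def[abs_def])
qed



lemma fE_diff_bound:
  fixes a b u :: real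
  assumes a: "a > 0" and b: "b > 0" and u: "u \<ge> 0"
  shows "norm (fE a u - fE b u) \<le> \<bar>a - b\<bar> / (u + min a b)^2"
proof -
  have "fE a u - fE b u = exp (\<i> * of_real u) * of_real (1/(u+a) - 1/(u+b))"
    unfolding fE_def by (simp add: divide_inverse algebra_simps del: of_real_add)
  then have "norm (fE a u - fE b u) = \<bar>1/(u+a) - 1/(u+b)\<bar>"
    by (simp only: norm_mult norm_of_real norm_exp_i_times) simp
  also have "1/(u+a) - 1/(u+b) = (b - a) / ((u+a)*(u+b))"
    using a b u by (simp add: field_simps)
  also have "\<bar>(b - a) / ((u+a)*(u+b))\<bar> = \<bar>a - b\<bar> / ((u+a)*(u+b))"
    using a b u by (simp add: abs_divide abs_minus_commute)
  also have "\<dots> \<le> \<bar>a - b\<bar> / (u + min a b)^2"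
  proof (rule divide_left_mono)
    show "(u + min a b)^2 \<le> (u+a)*(u+b)"
      unfolding power2_eq_square using a b u by (intro mult_mono) auto
    show "0 < (u+a)*(u+b) * (u + min a b)^2" using a b u by auto
  qed simp
  finally show ?thesis .
qed

lemma Eint_lip:
  fixes a b :: real
  assumes a: "a > 0" and b: "b > 0"
  shows "norm (Eint a - Eint b) \<le> \<bar>a - b\<bar> / min a b"
proof (rule Lim_norm_ubound)
  show "\<not> trivial_limit (at_top :: real filter)" by simp
  show "((\<lambda>R. integral {0..R} (fE a) - integral {0..R} (fE b)) \<longlongrightarrow> Eint a - Eint b) at_top"
    by (intro tendsto_diff fE_conv a b)
  define m where "m = min a b"
  have m: "m > 0" using a b by (simp add: m_def)
  show "\<forall>\<^sub>F R in at_top. norm (integral {0..R} (fE a) - integral {0..R} (fE b)) \<le> \<bar>a - b\<bar> / min a b"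
    using eventually_ge_at_top[of 0]
  proof eventually_elim
    case (elim R)
    have ia: "fE a integrable_on {0..R}" by (rule integrable_continuous_real[OF cont_fE[OF a order_refl]])
    have ib: "fE b integrable_on {0..R}" by (rule integrable_continuous_real[OF cont_fE[OF b order_refl]])
    have hi: "((\<lambda>u. 1 / (u + m)^2) has_integral (1/(0+m) - 1/(R+m))) {0..R}"
      by (rule inv_sq_integral[OF m order_refl elim])
    have "norm (integral {0..R} (fE a) - integral {0..R} (fE b)) = norm (integral {0..R} (\<lambda>u. fE a u - fE b u))"
      by (simp add: integral_diff[OF ia ib])
    also have "\<dots> \<le> integral {0..R} (\<lambda>u. \<bar>a - b\<bar> * (1 / (u + m)^2))"
    proof (rule integral_norm_bound_integral)
      show "(\<lambda>u. fE a u - fE b u) integrable_on {0..R}" using ia ib by (rule integrable_diff)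
      show "(\<lambda>u. \<bar>a - b\<bar> * (1 / (u + m)^2)) integrable_on {0..R}"
        using hi by (intro integrable_on_mult_right) blast
      fix u assume "u \<in> {0..R}"
      then show "norm (fE a u - fE b u) \<le> \<bar>a - b\<bar> * (1 / (u + m)^2)"
        using fE_diff_bound[OF a b, of u] by (simp add: m_def)
    qed
    also have "\<dots> = \<bar>a - b\<bar> * (1/m - 1/(R+m))"
      using integral_unique[OF hi] by (simp only: integral_mult_right) simp
    also have "\<dots> \<le> \<bar>a - b\<bar> / m"
      using m elim by (simp add: divide_inverse mult_left_mono)
    finally show ?case by (simp add: m_def)
  qed
qed



definition cc :: "real \<Rightarrow> complex" where
  "cc x = \<i> * of_real x / (1 - exp (-\<i> * of_real x))"

lemma one_minus_exp_nz:
  assumes "0 < x" "x < pi"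
  shows "1 - exp (-\<i> * of_real x) \<noteq> 0"
proof
  assume "1 - exp (-\<i> * of_real x) = 0"
  then have "Im (exp (-\<i> * of_real x)) = 0" by (metis eq_iff_diff_eq_0 one_complex.sel(2))
  moreover have "Im (exp (-\<i> * of_real x)) = - sin x" by (simp add: Im_exp)
  moreover have "sin x > 0" using assms by (intro sin_gt_zero)
  ultimately show False by simp
qed

lemma cell_sum:
  fixes f :: "real \<Rightarrow> complex"
  assumes "x \<ge> 0" "\<And>b. b \<ge> 0 \<Longrightarrow> f integrable_on {0..b}"
  shows "(\<Sum>k<N. integral {real k * x..real (Suc k) * x} f) = integral {0..real N * x} f"
proof (induction N)
  case 0 then show ?case by simp
next
  case (Suc N)
  have "integral {0..real N * x} f + integral {real N * x..real (Suc N) * x} f = integral {0..real (Suc N) * x} f"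
    by (rule Henstock_Kurzweil_Integration.integral_combine)
       (use assms in \<open>auto intro: mult_mono\<close>)
  then show ?case using Suc by simp
qed

lemma LA:
  assumes nu: "\<nu> > 0" and x: "0 < x" "x < pi"
  shows "norm (Lser x (\<nu> / x) - cc x * Eint \<nu>) \<le> norm (cc x) * (x / \<nu>)"
proof -
  define g where "g u = 1 / (u + \<nu>)" for u
  define a where "a k = exp (\<i> * of_real (real (Suc k) * x)) / of_real (real (Suc k) + \<nu> / x)" for k
  define J where "J k = integral {real k * x..real (Suc k) * x} (\<lambda>u. exp (\<i> * of_real u))" for k
  define cI where "cI k = integral {real k * x..real (Suc k) * x} (fE \<nu>)" for k
  define d where "d k = of_real (g (real (Suc k) * x)) * J k - cI k" for k
  define bd where "bd k = x * (g (real k * x) - g (real (Suc k) * x))" for k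
  have nz: "1 - exp (-\<i> * of_real x) \<noteq> 0" using one_minus_exp_nz[OF x] .
  have le: "real k * x \<le> real (Suc k) * x" for k using x by (intro mult_right_mono) auto
  have s1: "a k = cc x * (of_real (g (real (Suc k) * x)) * J k)" for k
  proof -
    define E1 where "E1 = exp (\<i> * of_real (real (Suc k) * x))"
    define w where "w = exp (-\<i> * of_real x)"
    have "exp (\<i> * of_real (real k * x)) = E1 * w"
    proof -
      have "\<i> * of_real (real k * x) = \<i> * of_real (real (Suc k) * x) + (-\<i> * of_real x)"
        by (simp add: algebra_simps)
      then show ?thesis unfolding E1_def w_def by (simp only: exp_add)
    qed
    then have J: "J k = -\<i> * E1 * (1 - w)"
      using integral_unique[OF expi_integral[OF le[of k]]] unfolding J_def E1_def
      by (simp add: algebra_simps)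
    have pos: "real (Suc k) * x + \<nu> > 0" using x nu by (simp add: add_pos_pos)
    have "real (Suc k) + \<nu> / x = (real (Suc k) * x + \<nu>) / x" using x by (simp add: field_simps)
    then have A: "a k = E1 * of_real x / of_real (real (Suc k) * x + \<nu>)"
      unfolding a_def E1_def using x by (simp del: of_real_add)
    have "cc x * (of_real (g (real (Suc k) * x)) * J k)
        = (\<i> * of_real x / (1 - w)) * (1 / of_real (real (Suc k) * x + \<nu>)) * (-\<i> * E1 * (1 - w))"
      unfolding cc_def g_def w_def J by (simp del: of_real_add)
    also have "\<dots> = E1 * of_real x / of_real (real (Suc k) * x + \<nu>)"
      using nz pos unfolding w_def by (simp add: field_simps del: of_real_add)
    finally show ?thesis using A by simp
  qed
  have s2: "norm (d k) \<le> bd k" for k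
  proof -
    define c where "c = g (real (Suc k) * x)"
    have ie: "(\<lambda>u. exp (\<i> * of_real u)) integrable_on {real k * x..real (Suc k) * x}"
      by (intro integrable_continuous_real continuous_intros)
    have k0: "real k * x \<ge> 0" using x by simp
    have iF: "fE \<nu> integrable_on {real k * x..real (Suc k) * x}"
      by (rule integrable_continuous_real[OF cont_fE[OF nu k0]])
    have "d k = integral {real k * x..real (Suc k) * x} (\<lambda>u. of_real c * exp (\<i> * of_real u) - fE \<nu> u)"
      unfolding d_def J_def cI_def c_def integral_diff[OF integrable_on_mult_right[OF ie] iF] integral_mult_right ..
    also have "norm \<dots> \<le> (g (real k * x) - c) * (real (Suc k) * x - real k * x)"
    proof (rule int_bound)
      show "continuous_on {real k * x..real (Suc k) * x} (\<lambda>u. of_real c * exp (\<i> * of_real u) - fE \<nu> u)"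
        by (intro continuous_intros cont_fE[OF nu k0])
      show "real k * x \<le> real (Suc k) * x" by (rule le)
      fix u assume u: "u \<in> {real k * x..real (Suc k) * x}"
      then have up: "u + \<nu> > 0" using k0 nu by auto
      have "of_real c * exp (\<i> * of_real u) - fE \<nu> u = exp (\<i> * of_real u) * of_real (c - g u)"
        unfolding fE_def g_def by (simp add: divide_inverse algebra_simps del: of_real_add)
      then have "norm (of_real c * exp (\<i> * of_real u) - fE \<nu> u) = \<bar>c - g u\<bar>"
        by (simp only: norm_mult norm_of_real norm_exp_i_times) simp
      also have "\<bar>c - g u\<bar> = g u - c"
        unfolding c_def g_def using u up by (auto simp: frac_le)
      also have "g u - c \<le> g (real k * x) - c"
        unfolding g_def using u up k0 nu by (auto simp: frac_le)
      finally show "norm (of_real c * exp (\<i> * of_real u) - fE \<nu> u) \<le> g (real k * x) - c" .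
    qed
    also have "\<dots> = bd k" unfolding bd_def c_def by (simp add: algebra_simps)
    finally show ?thesis .
  qed
  have s3: "(\<Sum>k<N. a k) = cc x * (integral {0..real N * x} (fE \<nu>) + (\<Sum>k<N. d k))" for N
  proof -
    have "(\<Sum>k<N. a k) = cc x * (\<Sum>k<N. of_real (g (real (Suc k) * x)) * J k)"
      by (simp add: s1 sum_distrib_left)
    also have "(\<Sum>k<N. of_real (g (real (Suc k) * x)) * J k) = (\<Sum>k<N. cI k) + (\<Sum>k<N. d k)"
      by (simp add: d_def sum.distrib[symmetric])
    also have "(\<Sum>k<N. cI k) = integral {0..real N * x} (fE \<nu>)"
      unfolding cI_def using x
      by (intro cell_sum) (auto intro: integrable_continuous_real cont_fE[OF nu])
    finally show ?thesis .
  qed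
  have gl: "(\<lambda>k. x * g (real k * x)) \<longlonglongrightarrow> 0"
  proof -
    have "filterlim (\<lambda>k. \<nu> + real k * x) at_top sequentially"
      by (rule filterlim_tendsto_add_at_top[OF tendsto_const filterlim_at_top_mult_tendsto_pos[OF tendsto_const x(1) filterlim_real_sequentially]])
    then have "filterlim (\<lambda>k. real k * x + \<nu>) at_top sequentially" by (simp add: add.commute)
    then have "(\<lambda>k. inverse (real k * x + \<nu>)) \<longlonglongrightarrow> 0" by (rule tendsto_inverse_0_at_top)
    then have "(\<lambda>k. x * inverse (real k * x + \<nu>)) \<longlonglongrightarrow> x * 0" by (intro tendsto_mult tendsto_const)
    then show ?thesis by (simp add: g_def divide_inverse)
  qed
  have bsums: "bd sums (x / \<nu>)"
  proof -
    have "(\<lambda>k. x * g (real k * x) - x * g (real (Suc k) * x)) sums (x * g (real 0 * x) - 0)"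
      by (rule telescope_sums'[OF gl])
    moreover have "bd = (\<lambda>k. x * g (real k * x) - x * g (real (Suc k) * x))"
      by (simp add: bd_def fun_eq_iff right_diff_distrib)
    moreover have "x * g (real 0 * x) - 0 = x / \<nu>" by (simp add: g_def)
    ultimately show ?thesis by simp
  qed
  have sumd: "summable (\<lambda>k. norm (d k))"
    by (rule summable_comparison_test[OF _ sums_summable[OF bsums]]) (use s2 in auto)
  then have sd: "summable d" by (rule summable_norm_cancel)
  have Dle: "norm (suminf d) \<le> x / \<nu>"
  proof -
    have "norm (suminf d) \<le> (\<Sum>k. norm (d k))" by (rule summable_norm[OF sumd])
    also have "\<dots> \<le> suminf bd" by (rule suminf_le[OF s2 sumd sums_summable[OF bsums]])
    also have "\<dots> = x / \<nu>" using bsums by (simp add: sums_iff)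
    finally show ?thesis .
  qed
  have "a sums (cc x * (Eint \<nu> + suminf d))"
    unfolding sums_def s3
  proof (intro tendsto_mult tendsto_const tendsto_add)
    have "filterlim (\<lambda>N. real N * x) at_top sequentially"
      by (rule filterlim_at_top_mult_tendsto_pos[OF tendsto_const x(1) filterlim_real_sequentially])
    from filterlim_compose[OF fE_conv[OF nu] this]
    show "(\<lambda>N. integral {0..real N * x} (fE \<nu>)) \<longlonglongrightarrow> Eint \<nu>" .
    show "(\<lambda>N. \<Sum>k<N. d k) \<longlonglongrightarrow> suminf d" using sd by (simp add: summable_LIMSEQ)
  qed
  then have "Lser x (\<nu> / x) = cc x * (Eint \<nu> + suminf d)"
    unfolding Lser_def a_def[abs_def] by (rule sums_unique[symmetric])
  then have "Lser x (\<nu> / x) - cc x * Eint \<nu> = cc x * suminf d" by (simp add: algebra_simps)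
  moreover have "norm (cc x) * norm (suminf d) \<le> norm (cc x) * (x / \<nu>)"
    using Dle by (intro mult_left_mono) auto
  ultimately show ?thesis by (simp only: norm_mult)
qed



lemma cc_lim: "(cc \<longlongrightarrow> 1) (at_right 0)"
proof -
  have e: "1 - exp (-\<i> * of_real y) = of_real (1 - cos y) + \<i> * of_real (sin y)" for y
    by (simp add: complex_eq_iff Re_exp Im_exp)
  have lim1: "((\<lambda>y. (1 - cos y) / y) \<longlongrightarrow> 0) (at_right (0::real))" by real_asymp
  have lim2: "((\<lambda>y. sin y / y) \<longlongrightarrow> 1) (at_right (0::real))" by real_asymp
  have "((\<lambda>y. \<i> / (of_real ((1 - cos y) / y) + \<i> * of_real (sin y / y))) \<longlongrightarrow> \<i> / (of_real 0 + \<i> * of_real 1)) (at_right (0::real))"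
    by (intro tendsto_intros lim1 lim2) simp
  then have L: "((\<lambda>y. \<i> / (of_real ((1 - cos y) / y) + \<i> * of_real (sin y / y))) \<longlongrightarrow> 1) (at_right (0::real))"
    by simp
  have ev: "\<forall>\<^sub>F y in at_right 0. \<i> / (of_real ((1 - cos y) / y) + \<i> * of_real (sin y / y)) = cc y"
    using eventually_at_right_less[of 0]
  proof eventually_elim
    case (elim y)
    then have "of_real y \<noteq> (0::complex)" by simp
    have "of_real ((1 - cos y)/y) + \<i> * of_real (sin y / y) = (of_real (1 - cos y) + \<i> * of_real (sin y)) / (of_real y :: complex)"
      by (simp add: add_divide_distrib del: of_real_diff)
    then show ?case unfolding cc_def e by (simp only: divide_divide_eq_right)
  qed
  show ?thesis by (rule Lim_transform_eventually[OF L ev])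
qed



lemma part_a:
  assumes nu: "\<nu> > 0"
  shows "((\<lambda>\<mu>. Lser (\<nu> / \<mu>) \<mu>) \<longlongrightarrow> Eint \<nu>) at_top"
proof -
  have f0: "filterlim (\<lambda>\<mu>. \<nu> / \<mu>) (at_right 0) at_top" using nu by real_asymp
  have ccl: "((\<lambda>\<mu>. cc (\<nu> / \<mu>)) \<longlongrightarrow> 1) at_top" by (rule filterlim_compose[OF cc_lim f0])
  have "((\<lambda>\<mu>. Lser (\<nu> / \<mu>) \<mu> - cc (\<nu> / \<mu>) * Eint \<nu>) \<longlongrightarrow> 0) at_top"
  proof (rule Lim_null_comparison)
    show "\<forall>\<^sub>F \<mu> in at_top. norm (Lser (\<nu> / \<mu>) \<mu> - cc (\<nu> / \<mu>) * Eint \<nu>) \<le> norm (cc (\<nu> / \<mu>)) * (1 / \<mu>)"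
      using eventually_gt_at_top[of "\<nu> / pi + 1"]
    proof eventually_elim
      case (elim \<mu>)
      have mp: "\<mu> > 0" using elim nu by (smt (verit) divide_nonneg_pos pi_gt_zero)
      have x: "0 < \<nu> / \<mu>" using mp nu by simp
      have "\<nu> / pi < \<mu>" using elim by simp
      then have "\<nu> < \<mu> * pi" using pi_gt_zero by (simp add: divide_less_eq)
      then have x2: "\<nu> / \<mu> < pi" using mp by (simp add: divide_less_eq mult.commute)
      have "norm (Lser (\<nu> / \<mu>) (\<nu> / (\<nu> / \<mu>)) - cc (\<nu> / \<mu>) * Eint \<nu>) \<le> norm (cc (\<nu> / \<mu>)) * ((\<nu> / \<mu>) / \<nu>)"
        by (rule LA[OF nu x x2])
      moreover have "\<nu> / (\<nu> / \<mu>) = \<mu>" "(\<nu> / \<mu>) / \<nu> = 1 / \<mu>" using nu mp by auto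
      ultimately show ?case by simp
    qed
    have "((\<lambda>\<mu>. norm (cc (\<nu> / \<mu>)) * (1 / \<mu>)) \<longlongrightarrow> norm (1::complex) * 0) at_top"
      by (intro tendsto_intros ccl) real_asymp
    then show "((\<lambda>\<mu>. norm (cc (\<nu> / \<mu>)) * (1 / \<mu>)) \<longlongrightarrow> 0) at_top" by simp
  qed
  moreover have "((\<lambda>\<mu>. cc (\<nu> / \<mu>) * Eint \<nu>) \<longlongrightarrow> 1 * Eint \<nu>) at_top"
    by (intro tendsto_intros ccl)
  ultimately have "((\<lambda>\<mu>. (Lser (\<nu> / \<mu>) \<mu> - cc (\<nu> / \<mu>) * Eint \<nu>) + cc (\<nu> / \<mu>) * Eint \<nu>) \<longlongrightarrow> 0 + 1 * Eint \<nu>) at_top"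
    by (rule tendsto_add)
  then show ?thesis by simp
qed

lemma part_b:
  assumes nu: "\<nu> > 0"
  shows "((\<lambda>lam. Lbold (\<nu> / lam) lam) \<longlongrightarrow> Eint \<nu>) at_top"
proof -
  have f0: "filterlim (\<lambda>lam. 2 * (\<nu> / lam)) (at_right 0) at_top" using nu by real_asymp
  have ccl: "((\<lambda>lam. cc (2 * (\<nu> / lam))) \<longlongrightarrow> 1) at_top" by (rule filterlim_compose[OF cc_lim f0])
  have el: "((\<lambda>lam. exp (-\<i> * of_real (\<nu> / lam))) \<longlongrightarrow> exp (-\<i> * of_real 0)) at_top"
  proof -
    have "((\<lambda>lam. \<nu> / lam) \<longlongrightarrow> 0) at_top" by real_asymp
    then show ?thesis by (intro tendsto_intros)
  qed
  define M where "M lam = exp (-\<i> * of_real (\<nu> / lam)) * cc (2 * (\<nu> / lam)) * Eint \<nu>" for lam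
  have "((\<lambda>lam. Lbold (\<nu> / lam) lam - M lam) \<longlongrightarrow> 0) at_top"
  proof (rule Lim_null_comparison)
    show "\<forall>\<^sub>F lam in at_top. norm (Lbold (\<nu> / lam) lam - M lam) \<le> norm (cc (2 * (\<nu> / lam))) * (3 / (lam - 1))"
      using eventually_gt_at_top[of "2 * \<nu> / pi + 2"]
    proof eventually_elim
      case (elim lam)
      have lp: "lam > 1" using elim nu by (smt (verit) divide_nonneg_pos pi_gt_zero)
      define x where "x = 2 * (\<nu> / lam)"
      define \<nu>' where "\<nu>' = \<nu> * (lam - 1) / lam"
      have x: "0 < x" using lp nu by (simp add: x_def)
      have "2 * \<nu> / pi < lam" using elim by simp
      then have "2 * \<nu> < lam * pi" using pi_gt_zero by (simp add: divide_less_eq)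
      then have x2: "x < pi" using lp by (simp add: x_def divide_less_eq mult.commute)
      have nu': "\<nu>' > 0" using lp nu by (simp add: \<nu>'_def)
      have eqm: "\<nu>' / x = (lam - 1) / 2" using lp nu by (simp add: \<nu>'_def x_def field_simps)
      have A: "norm (Lser x ((lam - 1) / 2) - cc x * Eint \<nu>') \<le> norm (cc x) * (x / \<nu>')"
        using LA[OF nu' x x2] by (simp add: eqm)
      have B: "norm (Eint \<nu>' - Eint \<nu>) \<le> \<bar>\<nu>' - \<nu>\<bar> / min \<nu>' \<nu>" by (rule Eint_lip[OF nu' nu])
      have r1: "x / \<nu>' = 2 / (lam - 1)" using lp nu by (simp add: \<nu>'_def x_def field_simps)
      have "\<nu>' \<le> \<nu>" using lp nu by (simp add: \<nu>'_def field_simps)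
      then have r2: "\<bar>\<nu>' - \<nu>\<bar> / min \<nu>' \<nu> = 1 / (lam - 1)"
        using lp nu by (simp add: \<nu>'_def field_simps min_def)
      have "Lbold (\<nu> / lam) lam - M lam = exp (-\<i> * of_real (\<nu> / lam)) *
              ((Lser x ((lam - 1) / 2) - cc x * Eint \<nu>') + cc x * (Eint \<nu>' - Eint \<nu>))"
        unfolding Lbold_def M_def x_def by (simp add: algebra_simps)
      also have "norm \<dots> = norm ((Lser x ((lam - 1) / 2) - cc x * Eint \<nu>') + cc x * (Eint \<nu>' - Eint \<nu>))"
        by (simp only: norm_mult) (simp add: norm_exp_i_times[of "- (\<nu> / lam)", simplified])
      also have "\<dots> \<le> norm (Lser x ((lam - 1) / 2) - cc x * Eint \<nu>') + norm (cc x) * norm (Eint \<nu>' - Eint \<nu>)"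
        by (rule order_trans[OF norm_triangle_ineq]) (simp add: norm_mult)
      also have "\<dots> \<le> norm (cc x) * (2 / (lam - 1)) + norm (cc x) * (1 / (lam - 1))"
        using A B r1 r2 by (intro add_mono mult_left_mono) auto
      also have "\<dots> = norm (cc x) * (3 / (lam - 1))" by (simp add: algebra_simps add_divide_distrib[symmetric])
      finally show ?case by (simp add: x_def)
    qed
    have "((\<lambda>lam. norm (cc (2 * (\<nu> / lam))) * (3 / (lam - 1))) \<longlongrightarrow> norm (1::complex) * 0) at_top"
      by (intro tendsto_intros ccl) real_asymp
    then show "((\<lambda>lam. norm (cc (2 * (\<nu> / lam))) * (3 / (lam - 1))) \<longlongrightarrow> 0) at_top" by simp
  qed
  moreover have "(M \<longlongrightarrow> exp (-\<i> * of_real 0) * 1 * Eint \<nu>) at_top"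
    unfolding M_def by (intro tendsto_intros ccl el)
  ultimately have "((\<lambda>lam. (Lbold (\<nu> / lam) lam - M lam) + M lam) \<longlongrightarrow> 0 + exp (-\<i> * of_real 0) * 1 * Eint \<nu>) at_top"
    by (rule tendsto_add)
  then show ?thesis by simp
qed

theorem proposition6:
  fixes \<nu> :: real
  assumes "\<nu> > 0"
  shows "(((\<lambda>\<mu>. Lser (\<nu> / \<mu>) \<mu>) \<longlongrightarrow> Eint \<nu>) at_top) \<and>
    (((\<lambda>lam. Lbold (\<nu> / lam) lam) \<longlongrightarrow> Eint \<nu>) at_top) \<and>
    (((\<lambda>lam. Ssi (\<nu> / lam) lam) \<longlongrightarrow> Si \<nu>) at_top) \<and>
    (((\<lambda>lam. of_real lam * Eci (\<nu> / lam) lam) \<longlongrightarrow> \<i> * (1 - exp (\<i> * of_real \<nu>))) at_top)"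
  using part_a[OF assms] part_b[OF assms] part_c[OF assms] part_d[OF assms] by blast

end
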